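(* Let $S$ be a semigroup, $I, J$ sets and $P$ a $J\times I$ matrix, and let $M$ be either $M(S; I, J; P)$ (entries of $P$ in $S$) or $M^0(S; I, J; P)$ (entries of $P$ in $S \cup \{0\}$), and suppose $M$ is finitely generated. Choose $i \in I$ and $j \in J$ with $P_{ji} \neq 0$ such that for every $j' \in J$ we have $P_{j'i} = 0$ or $S P_{j'i} \subseteq S P_{ji}$, and let $T = \{(i, s, j) : s \in S\} \subseteq M$. Let $\sigma : X^+ \to T$ and $\tau : Y^+ \to M$ be choices of generators such that $X \subseteq Y$ and $\sigma$ is the restriction of $\tau$ to $X^+$. Then $L_\sigma(T) = L_\tau(M) \cap \hat{X}^*$.
   Context: The Rees matrix semigroup with zero $M^0(S; I, J; P)$ (where $0 \notin S$) has elements $(I \times S \times J) \cup \{0\}$, $0$ is a zero, and $(i_1, g_1, j_1)(i_2, g_2, j_2) = (i_1, g_1 P_{j_1 i_2} g_2, j_2)$ if $P_{j_1 i_2} \in S$ and $=0$ if $P_{j_1 i_2} = 0$. If $P$ has no zero entries, $M(S;I,J;P)$ is the subsemigroup $I \times S \times J$. For a semigroup $S$, $S^1$ denotes the monoid obtained by adjoining a new identity $1$ (even if $S$ already has one). A choice of generators for $S$ is a surjective morphism $\sigma : X^+ \to S$ from a free semigroup; it extends uniquely to $\sigma^1 : X^* \to S^1$. Let $\overline{X} = \{\overline{x} : x \in X\}$ be a set of formal inverses, $\hat{X} = X \cup \overline{X}$. The loop automaton of $S$ with respect to $\sigma$ is the directed labelled graph with vertex set $S^1$, having for each $a \in S^1$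 and $x \in X$ an edge from $a$ to $a(x\sigma)$ labelled $x$ and an edge from $a(x\sigma)$ to $a$ labelled $\overline{x}$. The loop problem $L_\sigma(S) \subseteq \hat{X}^*$ is the set of words labelling paths from $1$ to $1$ in this graph (including the empty word). *)

theory Defs
  imports Main
begin

inductive_set sg_generated :: "('c \<Rightarrow> 'c \<Rightarrow> 'c) \<Rightarrow> 'c set \<Rightarrow> 'c set"
  for mult :: "'c \<Rightarrow> 'c \<Rightarrow> 'c" and A :: "'c set" where
  gen_base: "a \<in> A \<Longrightarrow> a \<in> sg_generated mult A"
| gen_mult: "a \<in> sg_generated mult A \<Longrightarrow> b \<in> sg_generated mult A \<Longrightarrow> mult a b \<in> sg_generated mult A"

text \<open>A choice of generators sigma : X^+ -> C (surjective morphism from the free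
  semigroup), determined by its values g on the letters of X.\<close>
definition choice_of_generators :: "'c set \<Rightarrow> ('c \<Rightarrow> 'c \<Rightarrow> 'c) \<Rightarrow> 'x set \<Rightarrow> ('x \<Rightarrow> 'c) \<Rightarrow> bool" where
  "choice_of_generators C mult X g \<longleftrightarrow> g ` X \<subseteq> C \<and> sg_generated mult (g ` X) = C"

definition finitely_generated :: "'c set \<Rightarrow> ('c \<Rightarrow> 'c \<Rightarrow> 'c) \<Rightarrow> bool" where
  "finitely_generated C mult \<longleftrightarrow> (\<exists>F. finite F \<and> F \<subseteq> C \<and> sg_generated mult F = C)"

text \<open>S^1: None is the adjoined identity 1.\<close>
fun mult1 :: "('c \<Rightarrow> 'c \<Rightarrow> 'c) \<Rightarrow> 'c option \<Rightarrow> 'c option \<Rightarrow> 'c option" where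
  "mult1 mult None b = b"
| "mult1 mult (Some a) None = Some a"
| "mult1 mult (Some a) (Some b) = Some (mult a b)"

text \<open>Letters of hat X: Inl x is x, Inr x is the formal inverse bar x.
  loop_path C mult X g a w b: w labels a path from a to b in the loop automaton
  (vertex set S^1 = insert None (Some ` C)).\<close>
inductive loop_path :: "'c set \<Rightarrow> ('c \<Rightarrow> 'c \<Rightarrow> 'c) \<Rightarrow> 'x set \<Rightarrow> ('x \<Rightarrow> 'c)
    \<Rightarrow> 'c option \<Rightarrow> ('x + 'x) list \<Rightarrow> 'c option \<Rightarrow> bool"
  for C mult X g where
  lp_nil: "a \<in> insert None (Some ` C) \<Longrightarrow> loop_path C mult X g a [] a"
| lp_fwd: "a \<in> insert None (Some ` C) \<Longrightarrow> x \<in> X \<Longrightarrow>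
     loop_path C mult X g (mult1 mult a (Some (g x))) w b \<Longrightarrow>
     loop_path C mult X g a (Inl x # w) b"
| lp_bwd: "a \<in> insert None (Some ` C) \<Longrightarrow> x \<in> X \<Longrightarrow>
     loop_path C mult X g a w b \<Longrightarrow>
     loop_path C mult X g (mult1 mult a (Some (g x))) (Inr x # w) b"

definition hat_words :: "'x set \<Rightarrow> ('x + 'x) list set" where
  "hat_words X = {w. set w \<subseteq> Inl ` X \<union> Inr ` X}"

definition loop_problem :: "'c set \<Rightarrow> ('c \<Rightarrow> 'c \<Rightarrow> 'c) \<Rightarrow> 'x set \<Rightarrow> ('x \<Rightarrow> 'c) \<Rightarrow> ('x + 'x) list set" where
  "loop_problem C mult X g = {w \<in> hat_words X. loop_path C mult X g None w None}"

text \<open>Rees matrix semigroup with zero over S (a type of class semigroup_mult),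
  index types 'i, 'j, sandwich matrix P (None = 0). The element None is the zero.\<close>
fun rees_mult :: "('j \<Rightarrow> 'i \<Rightarrow> 'a::semigroup_mult option)
    \<Rightarrow> ('i \<times> 'a \<times> 'j) option \<Rightarrow> ('i \<times> 'a \<times> 'j) option \<Rightarrow> ('i \<times> 'a \<times> 'j) option" where
  "rees_mult P (Some (i1, g1, j1)) (Some (i2, g2, j2)) =
     (case P j1 i2 of None \<Rightarrow> None | Some p \<Rightarrow> Some (i1, g1 * p * g2, j2))"
| "rees_mult P _ _ = None"

end

theory Submission
  imports Defs
begin

lemma lp_mono:
  assumes "loop_path C mult X g a w b" "C \<subseteq> C'" "X \<subseteq> Y"
  shows "loop_path C' mult Y g a w b"
  using assms
proof (induction rule: loop_path.induct)
  case (lp_nil a) then show ?case by (auto intro: loop_path.intros)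
next
  case (lp_fwd a x w b) then show ?case by (auto intro!: loop_path.lp_fwd)
next
  case (lp_bwd a x w b) then show ?case by (auto intro!: loop_path.lp_bwd)
qed

definition phi :: "('j \<Rightarrow> 'i \<Rightarrow> 'a::semigroup_mult option) \<Rightarrow> 'i \<Rightarrow> 'j \<Rightarrow> 'a
   \<Rightarrow> ('i \<times> 'a \<times> 'j) option option \<Rightarrow> ('i \<times> 'a \<times> 'j) option option" where
  "phi P i j p a = (case a of None \<Rightarrow> None | Some None \<Rightarrow> None
     | Some (Some (i', u, j')) \<Rightarrow> if j' = j then a
         else Some (Some (i, SOME s. s * p = u * the (P j' i), j)))"

definition goodv :: "('j \<Rightarrow> 'i \<Rightarrow> 'a::semigroup_mult option) \<Rightarrow> 'i
   \<Rightarrow> ('i \<times> 'a \<times> 'j) option option \<Rightarrow> bool" where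
  "goodv P i a \<longleftrightarrow> a = None \<or> (\<exists>u j' q. a = Some (Some (i, u, j')) \<and> P j' i = Some q)"

lemma phi_in:
  assumes "goodv P i a"
  shows "phi P i j p a \<in> insert None (Some ` {Some (i, s, j) | s. True})"
proof (cases "a = None")
  case True then show ?thesis by (simp add: phi_def)
next
  case False
  then obtain u j' q where a: "a = Some (Some (i, u, j'))"
    using assms unfolding goodv_def by blast
  show ?thesis
  proof (cases "j' = j")
    case True then show ?thesis using a by (simp add: phi_def)
  next
    case False then show ?thesis using a by (simp add: phi_def)
  qed
qed

lemma phi_mult:
  fixes P :: "'j \<Rightarrow> 'i \<Rightarrow> 'a::semigroup_mult option"
  assumes Pji: "P j i = Some p"
    and Pcond: "\<forall>j'. P j' i = None \<or>
                  (\<exists>q. P j' i = Some q \<and> {s * q | s. True} \<subseteq> {s * p | s. True})"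
    and g: "goodv P i a"
  shows "mult1 (rees_mult P) (phi P i j p a) (Some (Some (i, t, j)))
       = phi P i j p (mult1 (rees_mult P) a (Some (Some (i, t, j))))"
proof (cases "a = None")
  case True then show ?thesis by (simp add: phi_def)
next
  case False
  then obtain u j' q where a: "a = Some (Some (i, u, j'))" and q: "P j' i = Some q"
    using g unfolding goodv_def by blast
  show ?thesis
  proof (cases "j' = j")
    case True then show ?thesis using a q by (simp add: phi_def)
  next
    case False
    have "{s * q | s. True} \<subseteq> {s * p | s. True}" using Pcond q
      by (metis option.distinct(1) option.inject)
    then have "u * q \<in> {s * p | s. True}" by blast
    then have "\<exists>s. s * p = u * q" by auto
    then have e: "(SOME s. s * p = u * q) * p = u * q" by (rule someI_ex)
    have "(SOME s. s * p = u * q) * p * t = u * q * t" using e by simp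
    then show ?thesis using a q False Pji by (simp add: phi_def mult.assoc)
  qed
qed

lemma sim:
  fixes P :: "'j \<Rightarrow> 'i \<Rightarrow> 'a::semigroup_mult option"
  assumes lp: "loop_path Mc (rees_mult P) Y \<tau> a w b"
    and Pji: "P j i = Some p"
    and Pcond: "\<forall>j'. P j' i = None \<or>
                  (\<exists>q. P j' i = Some q \<and> {s * q | s. True} \<subseteq> {s * p | s. True})"
    and tX: "\<tau> ` X \<subseteq> {Some (i, s, j) | s. True}"
  shows "b = None \<Longrightarrow> w \<in> hat_words X \<Longrightarrow> goodv P i a \<Longrightarrow>
     loop_path {Some (i, s, j) | s. True} (rees_mult P) X \<tau> (phi P i j p a) w None"
  using lp
proof (induction rule: loop_path.induct)
  case (lp_nil a)
  then show ?case by (auto intro!: loop_path.lp_nil simp: phi_def)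
next
  case (lp_fwd a x w b)
  have xX: "x \<in> X" using lp_fwd.prems(2) by (auto simp: hat_words_def)
  then obtain t where t: "\<tau> x = Some (i, t, j)" using tX by blast
  have pa: "phi P i j p a \<in> insert None (Some ` {Some (i, s, j) | s. True})"
    using lp_fwd.prems(3) by (rule phi_in)
  have g2: "goodv P i (mult1 (rees_mult P) a (Some (\<tau> x)))"
    using lp_fwd.prems(3) t Pji by (auto simp: goodv_def)
  have w: "w \<in> hat_words X" using lp_fwd.prems(2) by (auto simp: hat_words_def)
  have IH: "loop_path {Some (i, s, j) | s. True} (rees_mult P) X \<tau>
      (phi P i j p (mult1 (rees_mult P) a (Some (\<tau> x)))) w None"
    using lp_fwd.IH lp_fwd.prems(1) w g2 by blast
  show ?case
    apply (rule loop_path.lp_fwd[OF pa xX])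
    using IH phi_mult[OF Pji Pcond lp_fwd.prems(3), of t] t by simp
next
  case (lp_bwd a x w b)
  have xX: "x \<in> X" using lp_bwd.prems(2) by (auto simp: hat_words_def)
  then obtain t where t: "\<tau> x = Some (i, t, j)" using tX by blast
  have ga: "goodv P i a"
  proof -
    consider "a = None" | "a = Some None" | i' u j' where "a = Some (Some (i', u, j'))"
      by (metis option.exhaust prod_cases3)
    then show ?thesis
    proof cases
      case 1 then show ?thesis by (simp add: goodv_def)
    next
      case 2 then show ?thesis using lp_bwd.prems(3) t by (simp add: goodv_def)
    next
      case 3 then show ?thesis using lp_bwd.prems(3) t
        by (auto simp: goodv_def split: option.splits)
    qed
  qed
  have pa: "phi P i j p a \<in> insert None (Some ` {Some (i, s, j) | s. True})"
    using ga by (rule phi_in)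
  have w: "w \<in> hat_words X" using lp_bwd.prems(2) by (auto simp: hat_words_def)
  have IH: "loop_path {Some (i, s, j) | s. True} (rees_mult P) X \<tau> (phi P i j p a) w None"
    using lp_bwd.IH lp_bwd.prems(1) w ga by blast
  have "loop_path {Some (i, s, j) | s. True} (rees_mult P) X \<tau>
      (mult1 (rees_mult P) (phi P i j p a) (Some (\<tau> x))) (Inr x # w) None"
    by (rule loop_path.lp_bwd[OF pa xX IH])
  then show ?case using phi_mult[OF Pji Pcond ga, of t] t by simp
qed

theorem theorem5p2:
  fixes P :: "'j \<Rightarrow> 'i \<Rightarrow> 'a::semigroup_mult option"
    and Mc :: "('i \<times> 'a \<times> 'j) option set"
    and i :: 'i and j :: 'j and p :: 'a
    and X Y :: "'x set" and \<tau> :: "'x \<Rightarrow> ('i \<times> 'a \<times> 'j) option"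
  assumes M_cases: "(Mc = range Some \<and> (\<forall>j' i'. P j' i' \<noteq> None)) \<or> Mc = UNIV"
    and fg: "finitely_generated Mc (rees_mult P)"
    and Pji: "P j i = Some p"
    and Pcond: "\<forall>j'. P j' i = None \<or>
                  (\<exists>q. P j' i = Some q \<and> {s * q | s. True} \<subseteq> {s * p | s. True})"
    and XY: "X \<subseteq> Y"
    and sigma: "choice_of_generators {Some (i, s, j) | s. True} (rees_mult P) X \<tau>"
    and tau: "choice_of_generators Mc (rees_mult P) Y \<tau>"
  shows "loop_problem {Some (i, s, j) | s. True} (rees_mult P) X \<tau>
           = loop_problem Mc (rees_mult P) Y \<tau> \<inter> hat_words X"
proof
  have TM: "{Some (i, s, j) | s. True} \<subseteq> Mc" using M_cases by auto
  have hw: "hat_words X \<subseteq> hat_words Y" using XY unfolding hat_words_def by blast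
  show "loop_problem {Some (i, s, j) | s. True} (rees_mult P) X \<tau>
           \<subseteq> loop_problem Mc (rees_mult P) Y \<tau> \<inter> hat_words X"
    using lp_mono[OF _ TM XY] hw by (auto simp: loop_problem_def)
  have tX: "\<tau> ` X \<subseteq> {Some (i, s, j) | s. True}" using sigma by (simp add: choice_of_generators_def)
  show "loop_problem Mc (rees_mult P) Y \<tau> \<inter> hat_words X
     \<subseteq> loop_problem {Some (i, s, j) | s. True} (rees_mult P) X \<tau>"
  proof
    fix w assume "w \<in> loop_problem Mc (rees_mult P) Y \<tau> \<inter> hat_words X"
    then have l: "loop_path Mc (rees_mult P) Y \<tau> None w None" and w: "w \<in> hat_words X"
      by (auto simp: loop_problem_def)
    have "loop_path {Some (i, s, j) | s. True} (rees_mult P) X \<tau> (phi P i j p None) w None"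
      using sim[OF l Pji Pcond tX] w by (simp add: goodv_def)
    then show "w \<in> loop_problem {Some (i, s, j) | s. True} (rees_mult P) X \<tau>"
      using w by (simp add: loop_problem_def phi_def)
  qed
qed

end
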